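(* For an integer $k\ge 1$, let $T_k$ be the tree on $9k+4$ vertices with vertex set $\{v_0,v_1,v_2,v_3\}\cup\{x_{ij},y_{ij},z_{ij}: 1\le i\le 3,\ 1\le j\le k\}$ and edges $v_0v_i$ for $1\le i\le 3$, and $v_ix_{ij}$, $x_{ij}y_{ij}$, $y_{ij}z_{ij}$ for all $1\le i\le 3$, $1\le j\le k$ (so each $v_i$ has $k$ pendant paths $x_{ij}y_{ij}z_{ij}$ attached at $x_{ij}$). Then for every $k\ge 4$, the domination polynomial $D(T_k,x)$ is not log-concave.
   Context: A dominating set of a graph $G=(V,E)$ is a set $S\subseteq V$ such that every vertex is in $S$ or adjacent to a vertex of $S$. For a graph $G$ of order $n$, let $d_i$ be the number of dominating sets of $G$ of cardinality $i$; the domination polynomial is $D(G,x)=\sum_{i=0}^n d_i x^i$. A polynomial $a_0+a_1x+\cdots+a_nx^n$ is log-concave if $a_i^2\ge a_{i-1}a_{i+1}$ for every $1\le i\le n-1$. *)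

theory Defs
  imports Main
begin

definition dominating_set :: "'a set \<Rightarrow> ('a \<Rightarrow> 'a \<Rightarrow> bool) \<Rightarrow> 'a set \<Rightarrow> bool" where
  "dominating_set V E S \<longleftrightarrow> S \<subseteq> V \<and> (\<forall>v\<in>V. v \<in> S \<or> (\<exists>u\<in>S. E v u))"

definition dom_coeff :: "'a set \<Rightarrow> ('a \<Rightarrow> 'a \<Rightarrow> bool) \<Rightarrow> nat \<Rightarrow> nat" where
  "dom_coeff V E i = card {S. dominating_set V E S \<and> card S = i}"

definition log_concave_coeffs :: "(nat \<Rightarrow> nat) \<Rightarrow> nat \<Rightarrow> bool" where
  "log_concave_coeffs a n \<longleftrightarrow> (\<forall>i. 1 \<le> i \<and> i \<le> n - 1 \<longrightarrow> a (i - 1) * a (i + 1) \<le> (a i)^2)"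

definition dom_poly_log_concave :: "'a set \<Rightarrow> ('a \<Rightarrow> 'a \<Rightarrow> bool) \<Rightarrow> bool" where
  "dom_poly_log_concave V E \<longleftrightarrow> log_concave_coeffs (dom_coeff V E) (card V)"

datatype tvert = V nat | X nat nat | Y nat nat | Z nat nat

definition Tk_verts :: "nat \<Rightarrow> tvert set" where
  "Tk_verts k = {V i | i. i \<le> 3} \<union>
     {X i j | i j. 1 \<le> i \<and> i \<le> 3 \<and> 1 \<le> j \<and> j \<le> k} \<union>
     {Y i j | i j. 1 \<le> i \<and> i \<le> 3 \<and> 1 \<le> j \<and> j \<le> k} \<union>
     {Z i j | i j. 1 \<le> i \<and> i \<le> 3 \<and> 1 \<le> j \<and> j \<le> k}"

definition Tk_edges :: "nat \<Rightarrow> (tvert \<times> tvert) set" where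
  "Tk_edges k = {(V 0, V i) | i. 1 \<le> i \<and> i \<le> 3} \<union>
     {(V i, X i j) | i j. 1 \<le> i \<and> i \<le> 3 \<and> 1 \<le> j \<and> j \<le> k} \<union>
     {(X i j, Y i j) | i j. 1 \<le> i \<and> i \<le> 3 \<and> 1 \<le> j \<and> j \<le> k} \<union>
     {(Y i j, Z i j) | i j. 1 \<le> i \<and> i \<le> 3 \<and> 1 \<le> j \<and> j \<le> k}"

definition Tk_adj :: "nat \<Rightarrow> tvert \<Rightarrow> tvert \<Rightarrow> bool" where
  "Tk_adj k u v \<longleftrightarrow> (u, v) \<in> Tk_edges k \<or> (v, u) \<in> Tk_edges k"

end

theory Submission
  imports Defs
begin

definition PP :: "nat \<Rightarrow> (nat \<times> nat) set" where "PP k = {1..3} \<times> {1..k}"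
definition Ys :: "(nat \<times> nat) set \<Rightarrow> tvert set" where "Ys T = (\<lambda>(i,j). Y i j) ` T"
definition Zs :: "(nat \<times> nat) set \<Rightarrow> tvert set" where "Zs T = (\<lambda>(i,j). Z i j) ` T"
definition Xs :: "(nat \<times> nat) set \<Rightarrow> tvert set" where "Xs T = (\<lambda>(i,j). X i j) ` T"

lemma mem_sets[simp]:
  "Y i j \<in> Ys T \<longleftrightarrow> (i,j) \<in> T" "X i j \<notin> Ys T" "Z i j \<notin> Ys T" "V i \<notin> Ys T"
  "Z i j \<in> Zs T \<longleftrightarrow> (i,j) \<in> T" "X i j \<notin> Zs T" "Y i j \<notin> Zs T" "V i \<notin> Zs T"
  "X i j \<in> Xs T \<longleftrightarrow> (i,j) \<in> T" "Y i j \<notin> Xs T" "Z i j \<notin> Xs T" "V i \<notin> Xs T"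
  by (auto simp: Ys_def Zs_def Xs_def)

lemma PP_mem[simp]: "(i,j) \<in> PP k \<longleftrightarrow> 1 \<le> i \<and> i \<le> 3 \<and> 1 \<le> j \<and> j \<le> k"
  by (auto simp: PP_def)

lemma finite_PP[simp]: "finite (PP k)" by (simp add: PP_def)
lemma card_PP: "card (PP k) = 3 * k" by (simp add: PP_def)

lemma inj_Ys: "inj_on (\<lambda>(i,j). Y i j) T" by (auto simp: inj_on_def)
lemma inj_Zs: "inj_on (\<lambda>(i,j). Z i j) T" by (auto simp: inj_on_def)
lemma inj_Xs: "inj_on (\<lambda>(i,j). X i j) T" by (auto simp: inj_on_def)
lemma card_Ys[simp]: "card (Ys T) = card T" by (simp add: Ys_def card_image[OF inj_Ys])
lemma card_Zs[simp]: "card (Zs T) = card T" by (simp add: Zs_def card_image[OF inj_Zs])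
lemma card_Xs[simp]: "card (Xs T) = card T" by (simp add: Xs_def card_image[OF inj_Xs])
lemma fin_Ys[simp]: "finite T \<Longrightarrow> finite (Ys T)" by (simp add: Ys_def)
lemma fin_Zs[simp]: "finite T \<Longrightarrow> finite (Zs T)" by (simp add: Zs_def)
lemma fin_Xs[simp]: "finite T \<Longrightarrow> finite (Xs T)" by (simp add: Xs_def)

lemma verts_eq: "Tk_verts k = V ` {..3} \<union> Xs (PP k) \<union> Ys (PP k) \<union> Zs (PP k)"
  by (auto simp: Tk_verts_def Xs_def Ys_def Zs_def PP_def)

lemma finite_verts[simp]: "finite (Tk_verts k)" by (simp add: verts_eq)

lemma card_verts: "card (Tk_verts k) \<le> 9 * k + 4"
proof -
  have "card (Tk_verts k) \<le> card (V ` {..3} \<union> Xs (PP k) \<union> Ys (PP k)) + card (Zs (PP k))"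
    unfolding verts_eq by (rule card_Un_le)
  also have "\<dots> \<le> card (V ` {..3} \<union> Xs (PP k)) + card (Ys (PP k)) + card (Zs (PP k))"
    using card_Un_le[of "V ` {..3} \<union> Xs (PP k)" "Ys (PP k)"] by linarith
  also have "\<dots> \<le> card (V ` {..3}) + card (Xs (PP k)) + card (Ys (PP k)) + card (Zs (PP k))"
    using card_Un_le[of "V ` {..3}" "Xs (PP k)"] by linarith
  also have "\<dots> \<le> 4 + 3*k + 3*k + 3*k"
    using card_image_le[of "{..3::nat}" V] by (simp add: card_PP)
  finally show ?thesis by simp
qed

lemma adj_Z: "Tk_adj k (Z i j) u \<longleftrightarrow> (1\<le>i \<and> i\<le>3 \<and> 1\<le>j \<and> j\<le>k \<and> u = Y i j)"
  by (auto simp: Tk_adj_def Tk_edges_def)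
lemma adj_X: "Tk_adj k (X i j) u \<longleftrightarrow> (1\<le>i \<and> i\<le>3 \<and> 1\<le>j \<and> j\<le>k \<and> (u = V i \<or> u = Y i j))"
  by (auto simp: Tk_adj_def Tk_edges_def)
lemma adj_Y: "Tk_adj k (Y i j) u \<longleftrightarrow> (1\<le>i \<and> i\<le>3 \<and> 1\<le>j \<and> j\<le>k \<and> (u = X i j \<or> u = Z i j))"
  by (auto simp: Tk_adj_def Tk_edges_def)
lemma adj_V0: "Tk_adj k (V 0) u \<longleftrightarrow> (\<exists>i. 1\<le>i \<and> i\<le>3 \<and> u = V i)"
  by (auto simp: Tk_adj_def Tk_edges_def)
lemma adj_Vi: "1 \<le> i \<Longrightarrow> Tk_adj k (V i) u \<longleftrightarrow> (i\<le>3 \<and> (u = V 0 \<or> (\<exists>j. 1\<le>j \<and> j\<le>k \<and> u = X i j)))"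
  by (auto simp: Tk_adj_def Tk_edges_def)

definition famS :: "tvert set \<Rightarrow> (nat \<times> nat) set \<Rightarrow> (nat \<times> nat) set \<Rightarrow> tvert set" where
  "famS A P T = A \<union> Ys (P - T) \<union> Zs T"

lemma famS_card:
  assumes "finite A" "A \<inter> Ys UNIV = {}" "A \<inter> Zs UNIV = {}" "T \<subseteq> P" "finite P"
  shows "card (famS A P T) = card A + card P"
proof -
  have fT: "finite T" using assms finite_subset by blast
  have d1: "(A \<union> Ys (P - T)) \<inter> Zs T = {}" using assms(3) by (auto simp: Ys_def Zs_def)
  have d2: "A \<inter> Ys (P - T) = {}" using assms(2) by (auto simp: Ys_def)
  have "card (famS A P T) = card (A \<union> Ys (P - T)) + card (Zs T)"
    unfolding famS_def using d1 assms fT by (intro card_Un_disjoint) auto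
  also have "card (A \<union> Ys (P - T)) = card A + card (Ys (P - T))"
    using d2 assms by (intro card_Un_disjoint) auto
  also have "card (Ys (P - T)) = card P - card T" using assms fT by (simp add: card_Diff_subset)
  finally show ?thesis using assms card_mono[OF assms(5) assms(4)] by simp
qed

lemma famS_inj:
  assumes "A \<inter> Zs UNIV = {}"
  shows "inj_on (famS A P) (Pow P)"
proof (rule inj_onI)
  fix T1 T2 assume h: "T1 \<in> Pow P" "T2 \<in> Pow P" "famS A P T1 = famS A P T2"
  have r: "T = {p \<in> P. Z (fst p) (snd p) \<in> famS A P T}" if "T \<subseteq> P" for T
    using that assms by (auto simp: famS_def Zs_def Ys_def)
  show "T1 = T2" using r[of T1] r[of T2] h by auto
qed

lemma famS_dom:
  assumes "A \<subseteq> Tk_verts k" "T \<subseteq> PP k"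
    and v0: "V 0 \<in> A \<or> (\<exists>u\<in>A. Tk_adj k (V 0) u)"
    and vi: "\<And>i. 1 \<le> i \<Longrightarrow> i \<le> 3 \<Longrightarrow> V i \<in> A \<or> (\<exists>u\<in>A. Tk_adj k (V i) u)"
    and xi: "\<And>i j. (i,j) \<in> PP k \<Longrightarrow> (i,j) \<notin> T \<or> X i j \<in> A \<or> V i \<in> A"
  shows "dominating_set (Tk_verts k) (Tk_adj k) (famS A (PP k) T)"
  unfolding dominating_set_def
proof (intro conjI ballI)
  show "famS A (PP k) T \<subseteq> Tk_verts k"
    using assms(1,2) by (auto simp: famS_def verts_eq Ys_def Zs_def)
next
  fix v assume "v \<in> Tk_verts k"
  then consider (a) i where "v = V i" "i \<le> 3" | (b) i j where "v = X i j" "(i,j) \<in> PP k"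
    | (c) i j where "v = Y i j" "(i,j) \<in> PP k" | (d) i j where "v = Z i j" "(i,j) \<in> PP k"
    unfolding verts_eq by (auto simp: Xs_def Ys_def Zs_def)
  then show "v \<in> famS A (PP k) T \<or> (\<exists>u\<in>famS A (PP k) T. Tk_adj k v u)"
  proof cases
    case a
    then show ?thesis using v0 vi[of i] by (cases "i = 0") (auto simp: famS_def)
  next
    case b
    then show ?thesis using xi[of i j] assms(2)
      by (cases "(i,j) \<in> T") (auto simp: famS_def adj_X)
  next
    case c
    then show ?thesis using assms(2)
      by (cases "(i,j) \<in> T") (auto simp: famS_def adj_Y)
  next
    case d
    then show ?thesis using assms(2)
      by (cases "(i,j) \<in> T") (auto simp: famS_def adj_Z)
  qed
qed

definition Dset :: "nat \<Rightarrow> nat \<Rightarrow> tvert set set" where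
  "Dset k i = {S. dominating_set (Tk_verts k) (Tk_adj k) S \<and> card S = i}"

lemma Dset_finite: "finite (Dset k i)"
proof -
  have "Dset k i \<subseteq> Pow (Tk_verts k)" by (auto simp: Dset_def dominating_set_def)
  then show ?thesis by (meson finite_Pow_iff finite_subset finite_verts)
qed

lemma dom_coeff_Dset: "dom_coeff (Tk_verts k) (Tk_adj k) i = card (Dset k i)"
  by (simp add: dom_coeff_def Dset_def)

lemma VX_disj: "(range V \<union> Xs UNIV) \<inter> Ys UNIV = {}" "(range V \<union> Xs UNIV) \<inter> Zs UNIV = {}"
  by (auto simp: Xs_def Ys_def Zs_def)

definition Aa :: "tvert set" where "Aa = {V 1, V 2, V 3}"
definition Ad :: "nat \<Rightarrow> nat \<Rightarrow> tvert set" where "Ad l m = insert (X l m) (V ` ({1..3} - {l}))"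
definition QQ :: "nat \<Rightarrow> nat \<Rightarrow> nat \<Rightarrow> (nat \<times> nat) set" where
  "QQ k l m = {p \<in> PP k. fst p \<noteq> l \<or> snd p = m}"
definition Fa :: "nat \<Rightarrow> tvert set set" where "Fa k = famS Aa (PP k) ` Pow (PP k)"
definition Fd :: "nat \<Rightarrow> nat \<Rightarrow> nat \<Rightarrow> tvert set set" where
  "Fd k l m = famS (Ad l m) (PP k) ` Pow (QQ k l m)"

lemma card_QQ:
  assumes "(l,m) \<in> PP k" shows "card (QQ k l m) = 2 * k + 1"
proof -
  have e: "QQ k l m = insert (l,m) (({1..3} - {l}) \<times> {1..k})"
    using assms by (auto simp: QQ_def)
  have "card ({1..3::nat} - {l}) = 2" using assms by (simp add: card_Diff_singleton)
  then show ?thesis unfolding e by (simp add: card_cartesian_product)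
qed

lemma QQ_sub: "QQ k l m \<subseteq> PP k" by (auto simp: QQ_def)

lemma Fa_sub: "Fa k \<subseteq> Dset k (3*k+3)"
proof
  fix S assume "S \<in> Fa k"
  then obtain T where T: "T \<subseteq> PP k" "S = famS Aa (PP k) T" by (auto simp: Fa_def)
  have "card S = card Aa + card (PP k)"
    unfolding T(2) by (rule famS_card) (use T in \<open>auto simp: Aa_def Ys_def Zs_def\<close>)
  then have c: "card S = 3*k+3" by (simp add: Aa_def card_PP)
  have "dominating_set (Tk_verts k) (Tk_adj k) S"
    unfolding T(2)
  proof (rule famS_dom[OF _ T(1)])
    show "Aa \<subseteq> Tk_verts k" by (auto simp: Aa_def Tk_verts_def)
    show "V 0 \<in> Aa \<or> (\<exists>u\<in>Aa. Tk_adj k (V 0) u)" by (auto simp: Aa_def adj_V0)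
    show "V i \<in> Aa \<or> (\<exists>u\<in>Aa. Tk_adj k (V i) u)" if "1 \<le> i" "i \<le> 3" for i
      using that by (auto simp: Aa_def)
    show "(i,j) \<notin> T \<or> X i j \<in> Aa \<or> V i \<in> Aa" if "(i,j) \<in> PP k" for i j
      using that by (auto simp: Aa_def)
  qed
  then show "S \<in> Dset k (3*k+3)" using c by (simp add: Dset_def)
qed

lemma Fd_sub: assumes "(l,m) \<in> PP k" shows "Fd k l m \<subseteq> Dset k (3*k+3)"
proof
  fix S assume "S \<in> Fd k l m"
  then obtain T where T: "T \<subseteq> QQ k l m" "S = famS (Ad l m) (PP k) T" by (auto simp: Fd_def)
  have TP: "T \<subseteq> PP k" using T QQ_sub by blast
  have cA: "card (Ad l m) = 3"
  proof -
    have "card ({1..3::nat} - {l}) = 2" using assms by (simp add: card_Diff_singleton)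
    then have "card (V ` ({1..3} - {l})) = 2" by (simp add: card_image inj_on_def)
    then show ?thesis unfolding Ad_def by (subst card_insert_disjoint) auto
  qed
  have "card S = card (Ad l m) + card (PP k)"
    unfolding T(2)
  proof (rule famS_card[OF _ _ _ TP])
    have "Ad l m \<subseteq> range V \<union> Xs UNIV" by (auto simp: Ad_def)
    then show "Ad l m \<inter> Ys UNIV = {}" "Ad l m \<inter> Zs UNIV = {}" using VX_disj by blast+
  qed (simp_all add: Ad_def)
  then have c: "card S = 3*k+3" by (simp add: cA card_PP)
  have "dominating_set (Tk_verts k) (Tk_adj k) S"
    unfolding T(2)
  proof (rule famS_dom[OF _ TP])
    show "Ad l m \<subseteq> Tk_verts k"
    proof -
      have "X l m \<in> Xs (PP k)" using assms by simp
      moreover have "V ` ({1..3} - {l}) \<subseteq> V ` {..3}" by auto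
      ultimately show ?thesis unfolding Ad_def verts_eq by blast
    qed
    show "V 0 \<in> Ad l m \<or> (\<exists>u\<in>Ad l m. Tk_adj k (V 0) u)"
    proof (cases "l = 1")
      case True
      then have "V 2 \<in> Ad l m" by (simp add: Ad_def)
      moreover have "Tk_adj k (V 0) (V 2)" by (simp add: adj_V0)
      ultimately show ?thesis by blast
    next
      case False
      then have "V 1 \<in> Ad l m" by (simp add: Ad_def)
      moreover have "Tk_adj k (V 0) (V 1)" by (simp add: adj_V0)
      ultimately show ?thesis by blast
    qed
    show "V i \<in> Ad l m \<or> (\<exists>u\<in>Ad l m. Tk_adj k (V i) u)" if "1 \<le> i" "i \<le> 3" for i
    proof (cases "i = l")
      case True
      have "X l m \<in> Ad l m" by (simp add: Ad_def)
      moreover have "Tk_adj k (V i) (X l m)" using True assms that by (simp add: adj_Vi)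
      ultimately show ?thesis by blast
    next
      case False
      then have "V i \<in> Ad l m" using that by (simp add: Ad_def)
      then show ?thesis by blast
    qed
    show "(i,j) \<notin> T \<or> X i j \<in> Ad l m \<or> V i \<in> Ad l m" if "(i,j) \<in> PP k" for i j
      using that T(1) by (cases "i = l") (auto simp: Ad_def QQ_def)
  qed
  then show "S \<in> Dset k (3*k+3)" using c by (simp add: Dset_def)
qed

lemma card_Fa: "card (Fa k) = 2 ^ (3*k)"
proof -
  have "card (Fa k) = card (Pow (PP k))"
    unfolding Fa_def by (rule card_image, rule famS_inj) (auto simp: Aa_def Zs_def)
  then show ?thesis by (simp add: card_Pow card_PP)
qed

lemma card_Fd: assumes "(l,m) \<in> PP k" shows "card (Fd k l m) = 2 ^ (2*k+1)"
proof -
  have "card (Fd k l m) = card (Pow (QQ k l m))"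
    unfolding Fd_def
  proof (rule card_image, rule inj_on_subset[OF famS_inj])
    have "Ad l m \<subseteq> range V \<union> Xs UNIV" by (auto simp: Ad_def)
    then show "Ad l m \<inter> Zs UNIV = {}" using VX_disj by blast
    show "Pow (QQ k l m) \<subseteq> Pow (PP k)" using QQ_sub by blast
  qed
  then show ?thesis using assms QQ_sub finite_subset[OF QQ_sub]
    by (simp add: card_Pow card_QQ)
qed

lemma Fd_Aa: "S \<in> Fd k l m \<Longrightarrow> V l \<notin> S"
  by (auto simp: Fd_def famS_def Ad_def)
lemma Fd_in: "S \<in> Fd k l m \<Longrightarrow> X l m \<in> S \<and> (\<forall>i. 1 \<le> i \<and> i \<le> 3 \<and> i \<noteq> l \<longrightarrow> V i \<in> S)
   \<and> (\<forall>m'. X l m' \<in> S \<longrightarrow> m' = m)"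
  by (auto simp: Fd_def famS_def Ad_def)
lemma Fa_in: "S \<in> Fa k \<Longrightarrow> V 1 \<in> S \<and> V 2 \<in> S \<and> V 3 \<in> S"
  by (auto simp: Fa_def famS_def Aa_def)

lemma lower: "card (Dset k (3*k+3)) \<ge> 2^(3*k) + 3*k * 2^(2*k+1)"
proof -
  let ?U = "\<Union>p\<in>PP k. Fd k (fst p) (snd p)"
  have finF: "finite (Fd k l m)" for l m by (simp add: Fd_def finite_subset[OF QQ_sub])
  have cU: "card ?U = 3*k * 2^(2*k+1)"
  proof -
    have "card ?U = (\<Sum>p\<in>PP k. card (Fd k (fst p) (snd p)))"
    proof (rule card_UN_disjoint)
      show "\<forall>i\<in>PP k. \<forall>j\<in>PP k. i \<noteq> j \<longrightarrow> Fd k (fst i) (snd i) \<inter> Fd k (fst j) (snd j) = {}"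
      proof (intro ballI impI)
        fix p q assume pq: "p \<in> PP k" "q \<in> PP k" "p \<noteq> q"
        obtain l m l' m' where e: "p = (l,m)" "q = (l',m')" by (cases p, cases q)
        have lr: "1 \<le> l" "l \<le> 3" using pq(1) e by auto
        show "Fd k (fst p) (snd p) \<inter> Fd k (fst q) (snd q) = {}"
        proof (rule equals0I)
          fix S assume S: "S \<in> Fd k (fst p) (snd p) \<inter> Fd k (fst q) (snd q)"
          then have S1: "S \<in> Fd k l m" and S2: "S \<in> Fd k l' m'" using e by auto
          show False
          proof (cases "l = l'")
            case True
            then have "m \<noteq> m'" using pq e by auto
            moreover have "X l m \<in> S" using Fd_in[OF S1] by blast
            ultimately show False using Fd_in[OF S2] True by blast
          next
            case False
            then have "V l \<in> S" using Fd_in[OF S2] lr by blast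
            then show False using Fd_Aa[OF S1] by blast
          qed
        qed
      qed
    qed (simp_all add: finF)
    also have "\<dots> = (\<Sum>p\<in>PP k. 2 ^ (2*k+1))"
      by (rule sum.cong) (auto simp: card_Fd)
    finally show ?thesis by (simp add: card_PP)
  qed
  have disj: "Fa k \<inter> ?U = {}"
  proof -
    { fix S p assume "S \<in> Fa k" "p \<in> PP k" "S \<in> Fd k (fst p) (snd p)"
      then have h: "V (fst p) \<notin> S" "V 1 \<in> S" "V 2 \<in> S" "V 3 \<in> S"
        using Fa_in[of S k] Fd_Aa[of S k "fst p" "snd p"] by blast+
      have "fst p = 1 \<or> fst p = 2 \<or> fst p = 3" using \<open>p \<in> PP k\<close> by (cases p) auto
      then have False using h by auto }
    then show ?thesis by blast
  qed
  have c: "card (Fa k \<union> ?U) = card (Fa k) + card ?U"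
    by (rule card_Un_disjoint[OF _ _ disj]) (simp_all add: Fa_def finF)
  have sub: "Fa k \<union> ?U \<subseteq> Dset k (3*k+3)"
  proof (rule Un_least[OF Fa_sub], rule UN_least)
    fix p assume "p \<in> PP k"
    then show "Fd k (fst p) (snd p) \<subseteq> Dset k (3*k+3)" using Fd_sub[of "fst p" "snd p" k] by simp
  qed
  have "card (Fa k \<union> ?U) \<le> card (Dset k (3*k+3))" by (rule card_mono[OF Dset_finite sub])
  then show ?thesis using c card_Fa cU by simp
qed

definition F1a :: "nat \<Rightarrow> tvert set set" where
  "F1a k = (\<lambda>w. insert w (insert (V 0) (Ys (PP k)))) ` Tk_verts k"
definition F1b :: "nat \<Rightarrow> tvert set set" where
  "F1b k = (\<lambda>p. insert (X (fst p) (snd p)) (insert (V 0) (insert (Z (fst p) (snd p)) (Ys (PP k - {p}))))) ` PP k"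
definition F2 :: "nat \<Rightarrow> tvert set set" where
  "F2 k = (\<Union>l\<in>{1..3}. (\<lambda>T. insert (V 0) (insert (V l) (Ys (PP k - {l} \<times> T) \<union> Zs ({l} \<times> T)))) ` Pow {1..k})"

lemma card_F_bound: "card (F1a k \<union> F1b k \<union> F2 k) \<le> 3 * 2^k + 12 * k + 4"
proof -
  have a: "card (F1a k) \<le> 9*k+4" unfolding F1a_def
    using card_image_le[OF finite_verts, of "\<lambda>w. insert w (insert (V 0) (Ys (PP k)))" k] card_verts[of k]
    by linarith
  have b: "card (F1b k) \<le> 3*k" unfolding F1b_def
    using card_image_le[OF finite_PP, of "\<lambda>p. insert (X (fst p) (snd p)) (insert (V 0) (insert (Z (fst p) (snd p)) (Ys (PP k - {p}))))" k] card_PP[of k]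
    by linarith
  have "card (F2 k) \<le> (\<Sum>l\<in>{1..3::nat}. card ((\<lambda>T. insert (V 0) (insert (V l) (Ys (PP k - {l} \<times> T) \<union> Zs ({l} \<times> T)))) ` Pow {1..k}))"
    unfolding F2_def by (rule card_UN_le) simp
  also have "\<dots> \<le> (\<Sum>l\<in>{1..3::nat}. 2^k)"
  proof (rule sum_mono)
    fix l :: nat
    have "card ((\<lambda>T. insert (V 0) (insert (V l) (Ys (PP k - {l} \<times> T) \<union> Zs ({l} \<times> T)))) ` Pow {1..k}) \<le> card (Pow {1..k::nat})"
      by (rule card_image_le) simp
    then show "card ((\<lambda>T. insert (V 0) (insert (V l) (Ys (PP k - {l} \<times> T) \<union> Zs ({l} \<times> T)))) ` Pow {1..k}) \<le> 2^k"
      by (simp add: card_Pow)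
  qed
  finally have c: "card (F2 k) \<le> 3 * 2^k" by simp
  have "card (F1a k \<union> F1b k \<union> F2 k) \<le> card (F1a k) + card (F1b k) + card (F2 k)"
    using card_Un_le[of "F1a k \<union> F1b k" "F2 k"] card_Un_le[of "F1a k" "F1b k"] by linarith
  then show ?thesis using a b c by linarith
qed

lemma domD:
  assumes "dominating_set (Tk_verts k) (Tk_adj k) S" "v \<in> Tk_verts k"
  shows "v \<in> S \<or> (\<exists>u\<in>S. Tk_adj k v u)"
  using assms by (auto simp: dominating_set_def)

lemma YZ_in:
  assumes "dominating_set (Tk_verts k) (Tk_adj k) S" "(i,j) \<in> PP k"
  shows "Y i j \<in> S \<or> Z i j \<in> S"
proof -
  have vv: "Z i j \<in> Tk_verts k" using assms(2) by (simp add: verts_eq)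
  then show ?thesis using domD[OF assms(1) vv] by (auto simp: adj_Z)
qed

lemma X_force:
  assumes "dominating_set (Tk_verts k) (Tk_adj k) S" "(i,j) \<in> PP k" "Y i j \<notin> S" "V i \<notin> S"
  shows "X i j \<in> S"
proof -
  have vv: "X i j \<in> Tk_verts k" using assms(2) by (simp add: verts_eq)
  then show ?thesis using domD[OF assms(1) vv] assms by (auto simp: adj_X)
qed

lemma V_force:
  assumes "dominating_set (Tk_verts k) (Tk_adj k) S" "1 \<le> l" "l \<le> 3" "V 0 \<notin> S"
  shows "\<exists>u\<in>S. u = V l \<or> (\<exists>m. u = X l m)"
proof -
  have vv: "V l \<in> Tk_verts k" using assms by (simp add: verts_eq)
  then show ?thesis using domD[OF assms(1) vv] assms by (auto simp: adj_Vi)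
qed

lemma classify:
  assumes dom: "dominating_set (Tk_verts k) (Tk_adj k) S" and cS: "card S = 3*k+2"
  shows "S \<in> F1a k \<union> F1b k \<union> F2 k"
proof -
  have Sv: "S \<subseteq> Tk_verts k" using dom by (simp add: dominating_set_def)
  have finS: "finite S" by (rule finite_subset[OF Sv]) simp
  define pk where "pk = (\<lambda>p. if Y (fst p) (snd p) \<in> S then Y (fst p) (snd p) else Z (fst p) (snd p))"
  define PK where "PK = pk ` PP k"
  have PKS: "PK \<subseteq> S"
  proof
    fix x assume "x \<in> PK"
    then obtain i j where "(i,j) \<in> PP k" "x = pk (i,j)" by (auto simp: PK_def)
    then show "x \<in> S" using YZ_in[OF dom] by (auto simp: pk_def)
  qed
  have injpk: "inj_on pk (PP k)" by (auto simp: inj_on_def pk_def split: if_splits)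
  have cPK: "card PK = 3*k" by (simp add: PK_def card_image[OF injpk] card_PP)
  have PKt: "x \<in> PK \<Longrightarrow> (\<exists>i j. x = Y i j \<or> x = Z i j)" for x
    by (auto simp: PK_def pk_def)
  have PKY: "Y i j \<in> PK \<longleftrightarrow> (i,j) \<in> PP k \<and> Y i j \<in> S" for i j
  proof
    assume "Y i j \<in> PK" then show "(i,j) \<in> PP k \<and> Y i j \<in> S"
      by (auto simp: PK_def pk_def split: if_splits)
  next
    assume h: "(i,j) \<in> PP k \<and> Y i j \<in> S"
    then have "pk (i,j) = Y i j" by (simp add: pk_def)
    then show "Y i j \<in> PK" unfolding PK_def using h by (metis image_eqI)
  qed
  have PKZ: "Z i j \<in> PK \<longleftrightarrow> (i,j) \<in> PP k \<and> Y i j \<notin> S" for i j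
  proof
    assume "Z i j \<in> PK" then show "(i,j) \<in> PP k \<and> Y i j \<notin> S"
      by (auto simp: PK_def pk_def split: if_splits)
  next
    assume h: "(i,j) \<in> PP k \<and> Y i j \<notin> S"
    then have "pk (i,j) = Z i j" by (simp add: pk_def)
    then show "Z i j \<in> PK" unfolding PK_def using h by (metis image_eqI)
  qed
  show ?thesis
  proof (cases "V 0 \<in> S")
    case False
    have "\<forall>l\<in>{1..3}. \<exists>u. u \<in> S \<and> (u = V l \<or> (\<exists>m. u = X l m))"
    proof
      fix l :: nat assume "l \<in> {1..3}"
      then have "\<exists>u\<in>S. u = V l \<or> (\<exists>m. u = X l m)" using V_force[OF dom _ _ False] by simp
      then show "\<exists>u. u \<in> S \<and> (u = V l \<or> (\<exists>m. u = X l m))" by blast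
    qed
    from bchoice[OF this] obtain e where e0: "\<forall>l\<in>{1..3}. e l \<in> S \<and> (e l = V l \<or> (\<exists>m. e l = X l m))"
      by blast
    have e: "\<And>l. l \<in> {1..3} \<Longrightarrow> e l \<in> S \<and> (e l = V l \<or> (\<exists>m. e l = X l m))"
      using e0 by blast
    have inje: "inj_on e {1..3}"
    proof (rule inj_onI)
      fix a b assume ab: "a \<in> {1..3}" "b \<in> {1..3}" "e a = e b"
      show "a = b" using e[OF ab(1)] e[OF ab(2)] ab(3) by auto
    qed
    have ce: "card (e ` {1..3}) = 3" using card_image[OF inje] by simp
    have dj: "e ` {1..3} \<inter> PK = {}"
    proof -
      { fix l assume "l \<in> {1..3}" "e l \<in> PK"
        then have False using e[of l] PKt[of "e l"] by auto }
      then show ?thesis by blast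
    qed
    have sub: "e ` {1..3} \<union> PK \<subseteq> S" using e PKS by auto
    have "card (e ` {1..3} \<union> PK) = 3 + 3*k"
      using card_Un_disjoint[OF _ _ dj] ce cPK by (simp add: PK_def)
    then have "3 + 3*k \<le> card S" using card_mono[OF finS sub] by simp
    then show ?thesis using cS by simp
  next
    case True
    have V0PK: "V 0 \<notin> PK" using PKt by blast
    have sub1: "insert (V 0) PK \<subseteq> S" using True PKS by blast
    have c1: "card (insert (V 0) PK) = 3*k+1" using V0PK cPK by (simp add: PK_def)
    have "card (S - insert (V 0) PK) = 1"
      using card_Diff_subset[OF _ sub1] c1 cS by (simp add: PK_def)
    then obtain w where w: "S - insert (V 0) PK = {w}" by (rule card_1_singletonE)
    have Seq: "S = insert w (insert (V 0) PK)" using w sub1 by blast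
    have wn: "w \<noteq> V 0" "w \<notin> PK" using w by auto
    have wv: "w \<in> Tk_verts k" using Seq Sv by blast
    have Vin: "V i \<in> S \<Longrightarrow> V i = w \<or> i = 0" for i
      using Seq PKt by blast
    have Xin: "X i j \<in> S \<Longrightarrow> X i j = w" for i j
      using Seq PKt by blast
    show ?thesis
    proof (cases "\<exists>l. w = V l")
      case True
      then obtain l where l: "w = V l" by blast
      have l1: "1 \<le> l" "l \<le> 3" using l wn wv by (auto simp: verts_eq)
      have key: "Y i j \<in> S" if "(i,j) \<in> PP k" "i \<noteq> l" for i j
      proof (rule ccontr)
        assume nY: "Y i j \<notin> S"
        have "V i \<notin> S" using Vin[of i] that l by auto
        then have "X i j \<in> S" using X_force[OF dom that(1) nY] by blast
        then show False using Xin l by blast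
      qed
      define T where "T = {j \<in> {1..k}. Y l j \<notin> S}"
      have "PK = Ys (PP k - {l} \<times> T) \<union> Zs ({l} \<times> T)"
      proof (rule set_eqI)
        fix x
        show "x \<in> PK \<longleftrightarrow> x \<in> Ys (PP k - {l} \<times> T) \<union> Zs ({l} \<times> T)"
        proof (cases "\<exists>i j. x = Y i j \<or> x = Z i j")
          case True
          then obtain i j where "x = Y i j \<or> x = Z i j" by blast
          then show ?thesis using key[of i j] l1 by (cases "i = l") (auto simp: PKY PKZ T_def)
        next
          case False
          then show ?thesis using PKt[of x] by (auto simp: Zs_def Ys_def Zs_def)
        qed
      qed
      then have "S = insert (V 0) (insert (V l) (Ys (PP k - {l} \<times> T) \<union> Zs ({l} \<times> T)))"
        using Seq l by blast
      moreover have "T \<in> Pow {1..k}" by (auto simp: T_def)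
      ultimately have "S \<in> F2 k" unfolding F2_def
        by (intro UN_I[of l] image_eqI[of S _ T]) (use l1 in auto)
      then show ?thesis by blast
    next
      case False
      then have noV: "V i \<in> S \<Longrightarrow> i = 0" for i using Vin by blast
      show ?thesis
      proof (cases "\<forall>p\<in>PP k. Y (fst p) (snd p) \<in> S")
        case True
        have allY: "Y i j \<in> S" if "(i,j) \<in> PP k" for i j
          using True that by (metis fst_conv snd_conv)
        have "PK = Ys (PP k)"
        proof (rule set_eqI)
          fix x
          show "x \<in> PK \<longleftrightarrow> x \<in> Ys (PP k)"
          proof (cases "\<exists>i j. x = Y i j \<or> x = Z i j")
            case True
            then obtain i j where "x = Y i j \<or> x = Z i j" by blast
            then show ?thesis using allY[of i j] by (auto simp: PKY PKZ)
          next
            case False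
            then show ?thesis using PKt[of x] by (auto simp: Zs_def Ys_def)
          qed
        qed
        then have "S \<in> F1a k" unfolding F1a_def
          by (intro image_eqI[of S _ w]) (use Seq wv in auto)
        then show ?thesis by blast
      next
        case False
        then obtain i j where ij: "(i,j) \<in> PP k" "Y i j \<notin> S" by auto
        have "V i \<notin> S" using noV ij by auto
        then have "X i j \<in> S" using X_force[OF dom ij] by blast
        then have wX: "w = X i j" using Xin by simp
        have key: "Y a b \<in> S" if "(a,b) \<in> PP k" "(a,b) \<noteq> (i,j)" for a b
        proof (rule ccontr)
          assume nY: "Y a b \<notin> S"
          have "V a \<notin> S" using noV that by auto
          then have "X a b \<in> S" using X_force[OF dom that(1) nY] by blast
          then show False using Xin wX that(2) by auto
        qed
        have "PK = insert (Z i j) (Ys (PP k - {(i,j)}))"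
        proof (rule set_eqI)
          fix x
          show "x \<in> PK \<longleftrightarrow> x \<in> insert (Z i j) (Ys (PP k - {(i,j)}))"
          proof (cases "\<exists>a b. x = Y a b \<or> x = Z a b")
            case True
            then obtain a b where "x = Y a b \<or> x = Z a b" by blast
            then show ?thesis using key[of a b] ij by (cases "(a,b) = (i,j)") (auto simp: PKY PKZ)
          next
            case False
            then show ?thesis using PKt[of x] by (auto simp: Zs_def Ys_def)
          qed
        qed
        then have "S = insert (X (fst (i,j)) (snd (i,j))) (insert (V 0) (insert (Z (fst (i,j)) (snd (i,j))) (Ys (PP k - {(i,j)}))))"
          using Seq wX by auto
        then have "S \<in> F1b k" unfolding F1b_def
          by (intro image_eqI[of S _ "(i,j)"]) (use ij(1) in auto)
        then show ?thesis by blast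
      qed
    qed
  qed
qed

lemma pow_ge: "k \<ge> 4 \<Longrightarrow> 4 * k \<le> (2::nat)^k"
proof (induction k rule: dec_induct)
  case base then show ?case by simp
next
  case (step n) then show ?case by simp
qed

lemma arith_main:
  fixes k :: nat assumes "k \<ge> 4"
  shows "(3 * 2^k + 12 * k + 4)^2 < 2^(3*k) + 3*k * 2^(2*k+1)"
proof -
  define a :: nat where "a = 2^k"
  have a4: "4 * k \<le> a" using pow_ge[OF assms] by (simp add: a_def)
  have a16: "16 \<le> a" using a4 assms by linarith
  have "(2::nat)^(3*k) = (2^k)^3" by (metis power_mult mult.commute)
  then have e1: "(2::nat)^(3*k) = a*a*a" by (simp add: a_def power3_eq_cube)
  have "(2::nat)^(2*k) = (2^k)^2" by (metis power_mult mult.commute)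
  then have e2: "(2::nat)^(2*k+1) = 2*a*a" by (simp add: a_def power2_eq_square)
  have u: "3 * 2^k + 12 * k + 4 \<le> 6*a + 4" using a4 by (simp add: a_def)
  have "(3 * 2^k + 12 * k + 4)^2 \<le> (6*a+4)^2" using u by (rule power_mono) simp
  also have "\<dots> = 36*a*a + 48*a + 16" by (simp add: power2_eq_square algebra_simps)
  also have "\<dots> < 40*a*a"
  proof -
    have "64*a \<le> 4*a*a" using a16 by simp
    then show ?thesis using a16 by linarith
  qed
  also have "40*a*a \<le> a*a*a + 24*a*a"
  proof -
    have "16*(a*a) \<le> a*(a*a)" using a16 by (rule mult_right_mono) simp
    then show ?thesis by (simp add: algebra_simps)
  qed
  also have "\<dots> \<le> a*a*a + 3*k*(2*a*a)"
  proof -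
    have "24*(a*a) \<le> (6*k)*(a*a)" using assms by (intro mult_right_mono) simp_all
    then show ?thesis by (simp add: algebra_simps)
  qed
  finally show ?thesis using e1 e2 by simp
qed

lemma low_set: "insert (V 0) (Ys (PP k)) \<in> Dset k (3*k+1)"
proof -
  have e: "famS {V 0} (PP k) {} = insert (V 0) (Ys (PP k))" by (simp add: famS_def Zs_def)
  have c: "card (famS {V 0} (PP k) {}) = card {V 0} + card (PP k)"
    by (rule famS_card) (auto simp: Ys_def Zs_def)
  have d: "dominating_set (Tk_verts k) (Tk_adj k) (famS {V 0} (PP k) {})"
    by (rule famS_dom) (auto simp: verts_eq adj_Vi)
  show ?thesis using c d e by (simp add: Dset_def card_PP)
qed

lemma upper: "card (Dset k (3*k+2)) \<le> 3 * 2^k + 12 * k + 4"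
proof -
  have "Dset k (3*k+2) \<subseteq> F1a k \<union> F1b k \<union> F2 k" using classify by (auto simp: Dset_def)
  moreover have "finite (F1a k \<union> F1b k \<union> F2 k)" by (simp add: F1a_def F1b_def F2_def)
  ultimately have "card (Dset k (3*k+2)) \<le> card (F1a k \<union> F1b k \<union> F2 k)" by (rule card_mono[rotated])
  then show ?thesis using card_F_bound[of k] by linarith
qed

theorem proposition2p1:
  fixes k :: nat
  assumes "k \<ge> 4"
  shows "\<not> dom_poly_log_concave (Tk_verts k) (Tk_adj k)"
proof
  assume h: "dom_poly_log_concave (Tk_verts k) (Tk_adj k)"
  have cv: "6*k \<le> card (Tk_verts k)"
  proof -
    have "Ys (PP k) \<union> Zs (PP k) \<subseteq> Tk_verts k" by (auto simp: verts_eq)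
    have "card (Ys (PP k) \<union> Zs (PP k)) = card (Ys (PP k)) + card (Zs (PP k))"
      by (rule card_Un_disjoint) (auto simp: Ys_def Zs_def)
    moreover have "card (Ys (PP k)) + card (Zs (PP k)) = 6*k" by (simp add: card_PP)
    ultimately have "card (Ys (PP k) \<union> Zs (PP k)) = 6*k" by simp
    moreover have "Ys (PP k) \<union> Zs (PP k) \<subseteq> Tk_verts k" by (auto simp: verts_eq)
    ultimately show ?thesis using card_mono[OF finite_verts] by metis
  qed
  let ?i = "3*k+2"
  have "1 \<le> ?i \<and> ?i \<le> card (Tk_verts k) - 1" using cv assms by linarith
  then have ineq: "dom_coeff (Tk_verts k) (Tk_adj k) (?i - 1) * dom_coeff (Tk_verts k) (Tk_adj k) (?i + 1)
     \<le> (dom_coeff (Tk_verts k) (Tk_adj k) ?i)^2"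
    using h unfolding dom_poly_log_concave_def log_concave_coeffs_def by blast
  have d1: "1 \<le> card (Dset k (3*k+1))"
  proof -
    have "Dset k (3*k+1) \<noteq> {}" using low_set by blast
    then show ?thesis using Dset_finite by (simp add: Suc_le_eq card_gt_0_iff)
  qed
  have d3: "2^(3*k) + 3*k * 2^(2*k+1) \<le> card (Dset k (3*k+3))" by (rule lower)
  have d2: "(card (Dset k (3*k+2)))^2 \<le> (3 * 2^k + 12 * k + 4)^2" using upper by (rule power_mono) simp
  have "card (Dset k (3*k+3)) \<le> card (Dset k (3*k+1)) * card (Dset k (3*k+3))" using d1 by simp
  moreover have "card (Dset k (3*k+1)) * card (Dset k (3*k+3)) \<le> (card (Dset k (3*k+2)))^2"
  proof -
    have q: "?i - 1 = 3*k+1" "?i + 1 = 3*k+3" by simp_all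
    show ?thesis using ineq unfolding q dom_coeff_Dset .
  qed
  ultimately show False using d2 d3 arith_main[OF assms] by linarith
qed

end
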